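(* In the setting described in the context, writing $\alpha_V,\alpha_A,\boldsymbol\Delta_V,\boldsymbol\Delta_A,\mathbf{h}_{\mathbf{V}}=\mathbf{h}_{\mathbf{V},\tau},\mathbf{h}_{\mathbf{A}}=\mathbf{h}_{\mathbf{A},\tau}$ for quantities at time $\tau$, and $c_A=1-\eta_AK_P\alpha_V^2-\eta_A\|\boldsymbol\Delta_V\|_\mu^2$, $c_V=1-\eta_V(\alpha_A^2K_Q+1/T)-\eta_V\|\boldsymbol\Delta_A\|_\mu^2$, $$\|\boldsymbol\Delta_{\mathbf{A},\tau+1}\|_\mu^2=c_A^2\|\boldsymbol\Delta_{\mathbf{A}}\|_\mu^2-2\eta_Ac_A\langle\boldsymbol\Delta_{\mathbf{A}},\mathbf{h}_{\mathbf{A}}\rangle_\mu-\frac{\eta_A^2}{K_Q}\langle\mathbf{h}_{\mathbf{A}},\mathbf{Q}\rangle_\mu^2+\eta_A^2\|\mathbf{h}_{\mathbf{A}}\|_\mu^2,$$ $$\|\boldsymbol\Delta_{\mathbf{V},\tau+1}\|_\mu^2=c_V^2\|\boldsymbol\Delta_{\mathbf{V}}\|_\mu^2-2\eta_Vc_V\langle\boldsymbol\Delta_{\mathbf{V}},\mathbf{h}_{\mathbf{V}}\rangle_\mu-\frac{\eta_V^2}{K_P}\langle\mathbf{P},\mathbf{h}_{\mathbf{V}}\rangle_\mu^2+\eta_V^2\|\mathbf{h}_{\mathbf{V}}\|_\mu^2.$$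
   Context: $\boldsymbol\mu\in\mathbb{R}^N$ is a probability vector with positive entries; $\mathbf{P}\in\mathbb{R}^{N\times N}$ has nonnegative entries, columns summing to $1$, $\mathbf{P}\boldsymbol\mu=\boldsymbol\mu$; $\mathbf{Q}=(\mathbf{q}^{(1)},\dots,\mathbf{q}^{(N)})\in\mathbb{R}^{T\times N}$ has probability-vector columns. Data: $x_1,\dots,x_{T+1}$ i.i.d. with law $\boldsymbol\mu$, $x_o$ with $\Pr(x_o=n\mid x_{T+1}=k,x_1,\dots,x_T)=\sum_tq^{(k)}_tP_{n,x_t}$; $\mathbf{X}=(\mathbf{e}_{x_1},\dots,\mathbf{e}_{x_T})$; loss $l=\frac12\|\mathbf{e}_{x_o}-\mathbf{V}\mathbf{X}\mathbf{A}\mathbf{e}_{x_{T+1}}\|^2$. Preconditioned gradients: $\hat\nabla_{\mathbf{V}}l=(\mathbf{I}_N-\mathbf{1}\mathbf{1}^\top/N)(\nabla_{\mathbf{V}}l)\operatorname{diag}(1/\boldsymbol\mu)(\mathbf{I}_N-\boldsymbol\mu\boldsymbol\mu^\top/\|\boldsymbol\mu\|^2)$; $\hat\nabla_{\mathbf{A}}l$ has columns $\frac1{\mu_k}(\mathbf{I}_T-\mathbf{1}\mathbf{1}^\top/T)\nabla_{\mathbf{a}^{(k)}}l$. The iterate $(\mathbf{V}_\tau,\mathbf{A}_\tau)$ satisfies $\mathbf{1}^\top\mathbf{V}_\tau=\mathbf{1}^\top$, $\mathbf{1}^\top\mathbf{A}_\tau=\mathbf{1}^\top$, $\mathbf{V}_\tau\boldsymbol\mu=\boldsymbol\mu$,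 and $\mathbf{V}_{\tau+1}=\mathbf{V}_\tau-\eta_V(\mathbb{E}\hat\nabla_{\mathbf{V}}l+\mathbf{h}_{\mathbf{V},\tau})$, $\mathbf{A}_{\tau+1}=\mathbf{A}_\tau-\eta_A(\mathbb{E}\hat\nabla_{\mathbf{A}}l+\mathbf{h}_{\mathbf{A},\tau})$, where expectations are over the data at parameters $(\mathbf{V}_\tau,\mathbf{A}_\tau)$, and $\mathbf{h}_{\mathbf{V},\tau}=\hat\nabla^{(B)}_{\mathbf{V}}l-\mathbb{E}\hat\nabla_{\mathbf{V}}l$, $\mathbf{h}_{\mathbf{A},\tau}=\hat\nabla^{(B)}_{\mathbf{A}}l-\mathbb{E}\hat\nabla_{\mathbf{A}}l$ with $\hat\nabla^{(B)}$ the average of preconditioned per-sample gradients over $B$ fresh samples. $\langle\mathbf{M},\mathbf{M}'\rangle_\mu=\operatorname{Tr}(\mathbf{M}\operatorname{diag}(\boldsymbol\mu)\mathbf{M}'^\top)$, $\|\mathbf{M}\|_\mu^2=\langle\mathbf{M},\mathbf{M}\rangle_\mu$. $K_P=\|\mathbf{P}\|_\mu^2-\|\boldsymbol\mu\|^2>0$, $K_Q=\|\mathbf{Q}\|_\mu^2-1/T>0$; for any iterate, $\alpha_V=(\langle\mathbf{V},\mathbf{P}\rangle_\mu-\|\boldsymbol\mu\|^2)/K_P$, $\alpha_A=(\langle\mathbf{A},\mathbf{Q}\rangle_\mu-1/T)/K_Q$, $\boldsymbol\Delta_{\mathbf{V}}=\mathbf{V}-\alpha_V\mathbf{P}-(1-\alpha_V)\boldsymbol\mu\mathbf{1}^\top$,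 $\boldsymbol\Delta_{\mathbf{A}}=\mathbf{A}-\alpha_A\mathbf{Q}-(1-\alpha_A)\mathbf{1}\mathbf{1}^\top/T$; the subscript $\tau+1$ denotes these quantities at $(\mathbf{V}_{\tau+1},\mathbf{A}_{\tau+1})$. *)

theory Defs
  imports "HOL-Analysis.Analysis"
begin

text \<open>Index types: 'n (the N tokens) and 't (the T positions), both finite.
  Matrices are vec-of-vec: M $ i $ j is the (i,j) entry (row i, column j).
  P, V :: N x N;  Q, A :: T x N;  X :: N x T.\<close>

definition diag_vec :: "real^'n \<Rightarrow> real^'n^'n" where
  "diag_vec v = (\<chi> i j. if i = j then v $ i else 0)"

definition mu_inner :: "real^'n \<Rightarrow> real^'n^'r \<Rightarrow> real^'n^'r \<Rightarrow> real" where
  "mu_inner mu M M' = trace (M ** diag_vec mu ** transpose M')"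

definition mu_norm2 :: "real^'n \<Rightarrow> real^'n^'r \<Rightarrow> real" where
  "mu_norm2 mu M = mu_inner mu M M"

definition ones :: "real^'a" where "ones = (\<chi> i. 1)"

definition outer :: "real^'a \<Rightarrow> real^'b \<Rightarrow> real^'b^'a" where
  "outer u w = (\<chi> i j. u $ i * w $ j)"

definition grad :: "('a::real_inner \<Rightarrow> real) \<Rightarrow> 'a \<Rightarrow> 'a" where
  "grad f x = (THE D. GDERIV f x :> D)"

text \<open>A data sample: (x_1..x_T, x_{T+1}, x_o).\<close>
type_synonym ('n,'t) sample = "('t \<Rightarrow> 'n) \<times> 'n \<times> 'n"

definition Xmat :: "('t \<Rightarrow> 'n) \<Rightarrow> real^'t^'n" where
  "Xmat xs = (\<chi> n t. if xs t = n then 1 else 0)"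

definition loss :: "real^'n^'n \<Rightarrow> real^'n^'t \<Rightarrow> ('n,'t) sample \<Rightarrow> real" where
  "loss V A s = (case s of (xs, k, xo) \<Rightarrow>
      (1/2) * (norm (axis xo 1 - (V ** Xmat xs ** A) *v axis k 1))\<^sup>2)"

text \<open>Probability of a sample: x_1..x_{T+1} iid mu, and
  Pr(x_o = n | x_{T+1} = k, x_1..x_T) = sum_t q^(k)_t P_{n,x_t}.\<close>
definition sample_prob :: "real^'n \<Rightarrow> real^'n^'n \<Rightarrow> real^'n^'t \<Rightarrow> ('n,'t) sample \<Rightarrow> real" where
  "sample_prob mu P Q s = (case s of (xs, k, xo) \<Rightarrow>
      (\<Prod>t\<in>UNIV. mu $ xs t) * mu $ k * (\<Sum>t\<in>UNIV. Q $ t $ k * P $ xo $ xs t))"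

definition pgradV :: "real^'n \<Rightarrow> real^'n^'n \<Rightarrow> real^'n^'t \<Rightarrow> ('n,'t) sample \<Rightarrow> real^'n^'n" where
  "pgradV mu V A s =
     (mat 1 - (1 / real CARD('n)) *\<^sub>R outer ones ones)
     ** grad (\<lambda>V'. loss V' A s) V
     ** diag_vec (\<chi> i. 1 / mu $ i)
     ** (mat 1 - (1 / (mu \<bullet> mu)) *\<^sub>R outer mu mu)"

definition pgradA :: "real^'n \<Rightarrow> real^'n^'n \<Rightarrow> real^'n^'t \<Rightarrow> ('n,'t) sample \<Rightarrow> real^'n^'t" where
  "pgradA mu V A s =
     (\<chi> t k. ((1 / mu $ k) *\<^sub>R ((mat 1 - (1 / real CARD('t)) *\<^sub>R outer ones ones)
                 *v column k (grad (\<lambda>A'. loss V A' s) A))) $ t)"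

definition EpgradV :: "real^'n \<Rightarrow> real^'n^'n \<Rightarrow> real^'n^'t \<Rightarrow> real^'n^'n \<Rightarrow> real^'n^'t \<Rightarrow> real^'n^'n" where
  "EpgradV mu P Q V A = (\<Sum>s\<in>UNIV. sample_prob mu P Q s *\<^sub>R pgradV mu V A s)"

definition EpgradA :: "real^'n \<Rightarrow> real^'n^'n \<Rightarrow> real^'n^'t \<Rightarrow> real^'n^'n \<Rightarrow> real^'n^'t \<Rightarrow> real^'n^'t" where
  "EpgradA mu P Q V A = (\<Sum>s\<in>UNIV. sample_prob mu P Q s *\<^sub>R pgradA mu V A s)"

definition BpgradV :: "real^'n \<Rightarrow> nat \<Rightarrow> (nat \<Rightarrow> ('n,'t) sample) \<Rightarrow> real^'n^'n \<Rightarrow> real^'n^'t \<Rightarrow> real^'n^'n" where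
  "BpgradV mu B smp V A = (1 / real B) *\<^sub>R (\<Sum>i<B. pgradV mu V A (smp i))"

definition BpgradA :: "real^'n \<Rightarrow> nat \<Rightarrow> (nat \<Rightarrow> ('n,'t) sample) \<Rightarrow> real^'n^'n \<Rightarrow> real^'n^'t \<Rightarrow> real^'n^'t" where
  "BpgradA mu B smp V A = (1 / real B) *\<^sub>R (\<Sum>i<B. pgradA mu V A (smp i))"

definition K_P :: "real^'n \<Rightarrow> real^'n^'n \<Rightarrow> real" where
  "K_P mu P = mu_norm2 mu P - mu \<bullet> mu"

definition K_Q :: "real^'n \<Rightarrow> real^'n^'t \<Rightarrow> real" where
  "K_Q mu Q = mu_norm2 mu Q - 1 / real CARD('t)"

definition alpha_V :: "real^'n \<Rightarrow> real^'n^'n \<Rightarrow> real^'n^'n \<Rightarrow> real" where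
  "alpha_V mu P V = (mu_inner mu V P - mu \<bullet> mu) / K_P mu P"

definition alpha_A :: "real^'n \<Rightarrow> real^'n^'t \<Rightarrow> real^'n^'t \<Rightarrow> real" where
  "alpha_A mu Q A = (mu_inner mu A Q - 1 / real CARD('t)) / K_Q mu Q"

definition Delta_V :: "real^'n \<Rightarrow> real^'n^'n \<Rightarrow> real^'n^'n \<Rightarrow> real^'n^'n" where
  "Delta_V mu P V = V - alpha_V mu P V *\<^sub>R P - (1 - alpha_V mu P V) *\<^sub>R outer mu ones"

definition Delta_A :: "real^'n \<Rightarrow> real^'n^'t \<Rightarrow> real^'n^'t \<Rightarrow> real^'n^'t" where
  "Delta_A mu Q A = A - alpha_A mu Q A *\<^sub>R Q
      - (1 - alpha_A mu Q A) *\<^sub>R ((1 / real CARD('t)) *\<^sub>R outer ones ones)"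

end

theory Submission
  imports Defs
begin

lemma sum_fun_prod:
  fixes F :: "'t::finite \<Rightarrow> 'n::finite \<Rightarrow> real"
  shows "(\<Sum>xs\<in>(UNIV::('t\<Rightarrow>'n) set). \<Prod>t\<in>UNIV. F t (xs t)) = (\<Prod>t\<in>UNIV. \<Sum>n\<in>UNIV. F t n)"
proof -
  have "(UNIV::('t\<Rightarrow>'n) set) = PiE UNIV (\<lambda>_. UNIV)" by auto
  then show ?thesis by (simp add: prod_sum_PiE)
qed

lemma sum_ind1:
  fixes x :: "'n::finite \<Rightarrow> real"
  shows "(\<Sum>n\<in>UNIV. x n * (if n = i then 1 else 0)) = x i"
proof -
  have "\<And>n. x n * (if n = i then 1 else 0) = (if n = i then x i else 0)"
    by auto
  then show ?thesis by simp
qed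

lemma sum_ind2:
  fixes x :: "'n::finite \<Rightarrow> real"
  shows "(\<Sum>n\<in>UNIV. x n * (if n = i then 1 else 0) * (if n = j then 1 else 0)) = (if i = j then x i else 0)"
proof -
  have "\<And>n. x n * (if n = i then 1 else 0) * (if n = j then 1 else 0) = (if n = i then (if i = j then x i else 0) else 0)"
    by auto
  then show ?thesis by simp
qed

lemma E_two:
  fixes mu :: "real^'n::finite"
  assumes "sum (\<lambda>i. mu $ i) UNIV = 1"
  shows "(\<Sum>xs\<in>(UNIV::('t::finite\<Rightarrow>'n) set). (\<Prod>t\<in>UNIV. mu $ xs t) * (if xs t = i then 1 else 0) * (if xs s = j then 1 else 0))
     = (if t = s then (if i = j then mu $ i else 0) else mu $ i * mu $ j)"
proof -
  define F where "F = (\<lambda>u n. mu $ n * (if u = t then (if n = i then 1 else 0) else 1) * (if u = s then (if n = j then 1 else 0) else 1))"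
  have "\<And>xs::'t\<Rightarrow>'n. (\<Prod>u\<in>UNIV. F u (xs u)) = (\<Prod>t\<in>UNIV. mu $ xs t) * (if xs t = i then 1 else 0) * (if xs s = j then 1 else 0)"
    unfolding F_def prod.distrib by (simp add: prod.If_cases)
  then have "(\<Sum>xs\<in>(UNIV::('t\<Rightarrow>'n) set). (\<Prod>t\<in>UNIV. mu $ xs t) * (if xs t = i then 1 else 0) * (if xs s = j then 1 else 0))
     = (\<Prod>u\<in>UNIV. \<Sum>n\<in>UNIV. F u n)" by (simp add: sum_fun_prod[symmetric])
  also have "\<dots> = (if t = s then (if i = j then mu $ i else 0) else mu $ i * mu $ j)"
  proof (cases "t = s")
    case True
    have "(\<Prod>u\<in>UNIV. \<Sum>n\<in>UNIV. F u n) = (\<Prod>u\<in>UNIV. if u = t then (if i = j then mu $ i else 0) else 1)"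
      by (rule prod.cong) (auto simp: F_def True assms sum_ind2)
    then show ?thesis using True by simp
  next
    case False
    have "(\<Prod>u\<in>UNIV. \<Sum>n\<in>UNIV. F u n) = (\<Prod>u\<in>UNIV. if u = t then mu $ i else if u = s then mu $ j else 1)"
      by (rule prod.cong) (auto simp: F_def False assms sum_ind1)
    also have "\<dots> = mu $ i * mu $ j" using False
      by (simp add: prod.If_cases Diff_eq Int_commute)
    finally show ?thesis using False by simp
  qed
  finally show ?thesis .
qed

lemma grad_unique:
  fixes f :: "'a::real_inner \<Rightarrow> real"
  assumes "GDERIV f x :> D" shows "grad f x = D"
  unfolding grad_def
proof (rule the_equality)
  show "GDERIV f x :> D" by fact
  fix D' assume "GDERIV f x :> D'"
  then have "(\<lambda>h. h \<bullet> D) = (\<lambda>h. h \<bullet> D')" using assms unfolding gderiv_def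
    by (metis has_derivative_unique)
  then have "(D - D') \<bullet> D = (D - D') \<bullet> D'" by metis
  then have "(D - D') \<bullet> (D - D') = 0" by (simp add: inner_diff_right)
  then show "D' = D" by simp
qed

lemma inner_mv_outer:
  fixes x :: "real^'a::finite" and H :: "real^'b::finite^'a" and y :: "real^'b"
  shows "x \<bullet> (H *v y) = H \<bullet> outer x y"
  by (simp add: inner_vec_def matrix_vector_mult_def outer_def sum_distrib_left mult_ac)

lemma bl_mv: "bounded_linear (\<lambda>Z::real^'b::finite^'a::finite. Z *v y)"
proof -
  have "linear (\<lambda>Z::real^'b^'a. Z *v y)"
    by (rule linearI) (simp_all add: vec_eq_iff matrix_vector_mult_def sum.distrib sum_distrib_left algebra_simps)
  then show ?thesis by (simp add: linear_conv_bounded_linear)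
qed

lemma grad_quad:
  fixes c :: "real^'m::finite" and M :: "real^'a::finite^'m" and y :: "real^'b::finite"
    and Z :: "real^'b^'a"
  shows "grad (\<lambda>Z. 1/2 * (norm (c - M *v (Z *v y)))\<^sup>2) Z = - outer ((c - M *v (Z *v y)) v* M) y"
proof (rule grad_unique)
  define g where "g = (\<lambda>Z::real^'b^'a. c - M *v (Z *v y))"
  have bl: "bounded_linear (\<lambda>Z::real^'b^'a. M *v (Z *v y))"
    using bounded_linear_compose[OF matrix_vector_mul_bounded_linear[of M] bl_mv[of y]] by (simp add: o_def)
  have d: "(g has_derivative (\<lambda>H. - (M *v (H *v y)))) (at Z)"
    unfolding g_def using has_derivative_diff[OF has_derivative_const bounded_linear.has_derivative[OF bl has_derivative_id]] by simp
  have "((\<lambda>Z. 1/2 * (g Z \<bullet> g Z)) has_derivative (\<lambda>H. 1/2 * (g Z \<bullet> (- (M *v (H *v y))) + (- (M *v (H *v y))) \<bullet> g Z))) (at Z)"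
    by (intro has_derivative_mult_right has_derivative_inner d)
  moreover have "\<And>H. 1/2 * (g Z \<bullet> (- (M *v (H *v y))) + (- (M *v (H *v y))) \<bullet> g Z) = H \<bullet> (- outer (g Z v* M) y)"
  proof -
    fix H :: "real^'b^'a"
    have "g Z \<bullet> (M *v (H *v y)) = H \<bullet> outer (g Z v* M) y"
      by (metis dot_lmul_matrix inner_mv_outer)
    then show "1/2 * (g Z \<bullet> (- (M *v (H *v y))) + (- (M *v (H *v y))) \<bullet> g Z) = H \<bullet> (- outer (g Z v* M) y)"
      by (simp add: inner_commute)
  qed
  ultimately show "GDERIV (\<lambda>Z. 1/2 * (norm (c - M *v (Z *v y)))\<^sup>2) Z :> - outer ((c - M *v (Z *v y)) v* M) y"
    unfolding gderiv_def g_def by (simp add: power2_norm_eq_inner)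
qed


lemma proj_step:
  fixes W Pt h :: "'a::real_inner" and \<eta> a b K :: real
  assumes K: "Pt \<bullet> Pt = K" "K > 0"
  defines "D \<equiv> W - ((W \<bullet> Pt) / K) *\<^sub>R Pt"
  defines "W' \<equiv> W - \<eta> *\<^sub>R (a *\<^sub>R W - b *\<^sub>R Pt + h)"
  shows "(W' - ((W' \<bullet> Pt) / K) *\<^sub>R Pt) \<bullet> (W' - ((W' \<bullet> Pt) / K) *\<^sub>R Pt)
     = (1 - \<eta> * a)\<^sup>2 * (D \<bullet> D) - 2 * \<eta> * (1 - \<eta> * a) * (D \<bullet> h) - \<eta>\<^sup>2 / K * (h \<bullet> Pt)\<^sup>2 + \<eta>\<^sup>2 * (h \<bullet> h)"
proof -
  define r where "r = h - ((h \<bullet> Pt) / K) *\<^sub>R Pt"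
  have DP: "D \<bullet> Pt = 0" using K unfolding D_def by (simp add: inner_diff_left)
  have rP: "r \<bullet> Pt = 0" using K unfolding r_def by (simp add: inner_diff_left)
  have W'P: "W' \<bullet> Pt = (1 - \<eta> * a) * (W \<bullet> Pt) + \<eta> * b * K - \<eta> * (h \<bullet> Pt)"
    unfolding W'_def using K by (simp add: inner_diff_left inner_add_left algebra_simps)
  have e: "W' - ((W' \<bullet> Pt) / K) *\<^sub>R Pt = (1 - \<eta> * a) *\<^sub>R D - \<eta> *\<^sub>R r"
    unfolding W'P unfolding W'_def D_def r_def using K
    by (simp add: algebra_simps diff_divide_distrib add_divide_distrib scaleR_left_diff_distrib scaleR_add_left)
  have Dr: "D \<bullet> r = D \<bullet> h" unfolding r_def using DP by (simp add: inner_diff_right)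
  have rr: "r \<bullet> r = h \<bullet> h - (h \<bullet> Pt)\<^sup>2 / K"
    unfolding r_def using K by (simp add: inner_diff_left inner_diff_right inner_commute power2_eq_square field_simps)
  show ?thesis unfolding e
    by (simp add: inner_diff_left inner_diff_right inner_commute Dr rr power2_eq_square algebra_simps)
qed


lemma Xmat_mv: "(Xmat xs *v b) $ i = (\<Sum>t\<in>UNIV. (if xs t = i then 1 else 0) * b $ t)"
  by (simp add: Xmat_def matrix_vector_mult_def)

lemma sum_if_split:
  fixes b c :: "'t::finite \<Rightarrow> real"
  shows "(\<Sum>t\<in>UNIV. \<Sum>s\<in>UNIV. b t * c s * (if t = s then X else Y)) = (\<Sum>t\<in>UNIV. b t * c t) * (X - Y) + (sum b UNIV) * (sum c UNIV) * Y"
proof -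
  have "\<And>t s. b t * c s * (if t = s then X else Y) = b t * c s * Y + (if s = t then b t * c t * (X - Y) else 0)"
    by (auto simp: algebra_simps)
  then have "(\<Sum>t\<in>UNIV. \<Sum>s\<in>UNIV. b t * c s * (if t = s then X else Y)) = (\<Sum>t\<in>UNIV. \<Sum>s\<in>UNIV. b t * c s * Y) + (\<Sum>t\<in>UNIV. b t * c t * (X - Y))"
    by (simp add: sum.distrib)
  moreover have "(\<Sum>t\<in>UNIV. \<Sum>s\<in>UNIV. b t * c s * Y) = (sum b UNIV) * (sum c UNIV) * Y"
  proof -
    have "(\<Sum>t\<in>UNIV. \<Sum>s\<in>UNIV. b t * c s * Y) = (\<Sum>t\<in>UNIV. b t * (sum c UNIV * Y))"
      by (simp add: sum_distrib_left sum_distrib_right mult_ac)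
    also have "\<dots> = sum b UNIV * (sum c UNIV * Y)" by (rule sum_distrib_right[symmetric])
    finally show ?thesis by simp
  qed
  moreover have "(\<Sum>t\<in>UNIV. b t * c t * (X - Y)) = (\<Sum>t\<in>UNIV. b t * c t) * (X - Y)"
    by (simp add: sum_distrib_right)
  ultimately show ?thesis by simp
qed

lemma EK_entry:
  fixes mu :: "real^'n::finite" and b c :: "real^'t::finite"
  assumes "sum (\<lambda>i. mu $ i) UNIV = 1"
  shows "(\<Sum>xs\<in>(UNIV::('t\<Rightarrow>'n) set). (\<Prod>t\<in>UNIV. mu $ xs t) * ((Xmat xs *v b) $ i * (Xmat xs *v c) $ j))
     = (b \<bullet> c) * ((if i = j then mu $ i else 0) - mu $ i * mu $ j) + (\<Sum>t\<in>UNIV. b $ t) * (\<Sum>t\<in>UNIV. c $ t) * (mu $ i * mu $ j)"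
proof -
  have "(\<Sum>xs\<in>(UNIV::('t\<Rightarrow>'n) set). (\<Prod>t\<in>UNIV. mu $ xs t) * ((Xmat xs *v b) $ i * (Xmat xs *v c) $ j))
     = (\<Sum>xs\<in>(UNIV::('t\<Rightarrow>'n) set). \<Sum>t\<in>UNIV. \<Sum>s\<in>UNIV. b $ t * c $ s * ((\<Prod>t\<in>UNIV. mu $ xs t) * (if xs t = i then 1 else 0) * (if xs s = j then 1 else 0)))"
  proof (rule sum.cong[OF refl])
    fix xs :: "'t \<Rightarrow> 'n"
    have "(Xmat xs *v b) $ i * (Xmat xs *v c) $ j = (\<Sum>t\<in>UNIV. \<Sum>s\<in>UNIV. ((if xs t = i then 1 else 0) * b $ t) * ((if xs s = j then 1 else 0) * c $ s))"
      unfolding Xmat_mv by (rule sum_product)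
    then show "(\<Prod>t\<in>UNIV. mu $ xs t) * ((Xmat xs *v b) $ i * (Xmat xs *v c) $ j) = (\<Sum>t\<in>UNIV. \<Sum>s\<in>UNIV. b $ t * c $ s * ((\<Prod>t\<in>UNIV. mu $ xs t) * (if xs t = i then 1 else 0) * (if xs s = j then 1 else 0)))"
      by (simp add: sum_distrib_left mult_ac)
  qed
  also have "\<dots> = (\<Sum>t\<in>UNIV. \<Sum>xs\<in>(UNIV::('t\<Rightarrow>'n) set). \<Sum>s\<in>UNIV. b $ t * c $ s * ((\<Prod>t\<in>UNIV. mu $ xs t) * (if xs t = i then 1 else 0) * (if xs s = j then 1 else 0)))"
    by (rule sum.swap)
  also have "\<dots> = (\<Sum>t\<in>UNIV. \<Sum>s\<in>UNIV. \<Sum>xs\<in>(UNIV::('t\<Rightarrow>'n) set). b $ t * c $ s * ((\<Prod>t\<in>UNIV. mu $ xs t) * (if xs t = i then 1 else 0) * (if xs s = j then 1 else 0)))"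
    by (rule sum.cong[OF refl], rule sum.swap)
  also have "\<dots> = (\<Sum>t\<in>UNIV. \<Sum>s\<in>UNIV. b $ t * c $ s * (\<Sum>xs\<in>(UNIV::('t\<Rightarrow>'n) set). (\<Prod>t\<in>UNIV. mu $ xs t) * (if xs t = i then 1 else 0) * (if xs s = j then 1 else 0)))"
    by (simp add: sum_distrib_left)
  also have "\<dots> = (b \<bullet> c) * ((if i = j then mu $ i else 0) - mu $ i * mu $ j) + (\<Sum>t\<in>UNIV. b $ t) * (\<Sum>t\<in>UNIV. c $ t) * (mu $ i * mu $ j)"
    unfolding E_two[OF assms] sum_if_split[of "\<lambda>t. b $ t" "\<lambda>s. c $ s"] by (simp add: inner_vec_def)
  finally show ?thesis .
qed

lemma EK:
  fixes mu :: "real^'n::finite" and b c :: "real^'t::finite"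
  assumes "sum (\<lambda>i. mu $ i) UNIV = 1"
  shows "(\<Sum>xs\<in>(UNIV::('t\<Rightarrow>'n) set). (\<Prod>t\<in>UNIV. mu $ xs t) *\<^sub>R outer (Xmat xs *v b) (Xmat xs *v c))
     = (b \<bullet> c) *\<^sub>R (diag_vec mu - outer mu mu) + ((\<Sum>t\<in>UNIV. b $ t) * (\<Sum>t\<in>UNIV. c $ t)) *\<^sub>R outer mu mu"
  using EK_entry[OF assms, where b=b and c=c]
  by (simp add: vec_eq_iff outer_def diag_vec_def sum_component algebra_simps)

lemma mm_diff_left: "(A::real^'m::finite^'n::finite) ** (B - C) = A ** B - A ** (C::real^'k::finite^'m)"
  by (simp add: vec_eq_iff matrix_matrix_mult_def sum_subtractf algebra_simps)
lemma mm_diff_right: "((A::real^'m::finite^'n::finite) - B) ** (C::real^'k::finite^'m) = A ** C - B ** C"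
  by (simp add: vec_eq_iff matrix_matrix_mult_def sum_subtractf algebra_simps)
lemma mm_add_right: "((A::real^'m::finite^'n::finite) + B) ** (C::real^'k::finite^'m) = A ** C + B ** C"
  by (simp add: vec_eq_iff matrix_matrix_mult_def sum.distrib algebra_simps)
lemma mm_scale_left: "(A::real^'m::finite^'n::finite) ** (c *\<^sub>R (B::real^'k::finite^'m)) = c *\<^sub>R (A ** B)"
  by (simp add: vec_eq_iff matrix_matrix_mult_def sum_distrib_left algebra_simps)
lemma mm_scale_right: "(c *\<^sub>R (A::real^'m::finite^'n::finite)) ** (B::real^'k::finite^'m) = c *\<^sub>R (A ** B)"
  by (simp add: vec_eq_iff matrix_matrix_mult_def sum_distrib_left algebra_simps)
lemma vm_add: "x v* ((A::real^'m::finite^'n::finite) + B) = x v* A + x v* B"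
  by (simp add: vec_eq_iff vector_matrix_mult_def sum.distrib algebra_simps)
lemma mm_diag: "(M::real^'m::finite^'n::finite) ** diag_vec d = (\<chi> i j. M$i$j * d$j)"
proof -
  have "\<And>i j. (\<Sum>k\<in>UNIV. M $ i $ k * (if k = j then d $ k else 0)) = M$i$j * d$j"
  proof -
    fix i j
    have "\<And>k. M $ i $ k * (if k = j then d $ k else 0) = (if k = j then M$i$j * d$j else 0)" by auto
    then show "(\<Sum>k\<in>UNIV. M $ i $ k * (if k = j then d $ k else 0)) = M$i$j * d$j" by simp
  qed
  then show ?thesis by (simp add: vec_eq_iff matrix_matrix_mult_def diag_vec_def)
qed
lemma outer_mm: "(M::real^'m::finite^'n::finite) ** outer u w = outer (M *v u) w"
  by (simp add: vec_eq_iff matrix_matrix_mult_def outer_def matrix_vector_mult_def sum_distrib_right sum_distrib_left mult_ac)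
lemma outer_mm_left: "outer u w ** (M::real^'m::finite^'n::finite) = outer u (w v* M)"
  by (simp add: vec_eq_iff matrix_matrix_mult_def outer_def vector_matrix_mult_def sum_distrib_left mult_ac)
lemma outer_mv: "outer (u::real^'a::finite) (w::real^'b::finite) *v x = (w \<bullet> x) *\<^sub>R u"
  by (simp add: vec_eq_iff outer_def matrix_vector_mult_def inner_vec_def sum_distrib_left mult_ac)
lemma vm_outer: "x v* outer (u::real^'a::finite) (w::real^'b::finite) = (x \<bullet> u) *\<^sub>R w"
  by (simp add: vec_eq_iff outer_def vector_matrix_mult_def inner_vec_def sum_distrib_left mult_ac)
lemma mm_sum_left:
  fixes L :: "real^'m::finite^'n::finite" and M :: "'s \<Rightarrow> real^'k::finite^'m"
  shows "L ** (\<Sum>s\<in>S. c s *\<^sub>R M s) = (\<Sum>s\<in>S. c s *\<^sub>R (L ** M s))"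
proof (induction S rule: infinite_finite_induct)
  case (insert x F) then show ?case by (simp add: matrix_add_ldistrib mm_scale_left)
qed (auto simp: vec_eq_iff matrix_matrix_mult_def)
lemma mm_sum_right:
  fixes R :: "real^'m::finite^'n::finite" and M :: "'s \<Rightarrow> real^'n^'k::finite"
  shows "(\<Sum>s\<in>S. c s *\<^sub>R M s) ** R = (\<Sum>s\<in>S. c s *\<^sub>R (M s ** R))"
proof (induction S rule: infinite_finite_induct)
  case (insert x F) then show ?case by (simp add: mm_add_right mm_scale_right)
qed (auto simp: vec_eq_iff matrix_matrix_mult_def)
lemma mv_sum:
  fixes M :: "'s \<Rightarrow> real^'n::finite^'m::finite"
  shows "(\<Sum>s\<in>S. M s) *v x = (\<Sum>s\<in>S. M s *v x)"
proof (induction S rule: infinite_finite_induct)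
  case (insert x F) then show ?case by (simp add: matrix_vector_mult_add_rdistrib)
qed (auto simp: vec_eq_iff matrix_vector_mult_def)
lemma vm_sum:
  fixes M :: "'s \<Rightarrow> real^'n::finite^'m::finite"
  shows "x v* (\<Sum>s\<in>S. M s) = (\<Sum>s\<in>S. x v* M s)"
proof (induction S rule: infinite_finite_induct)
  case (insert x F) then show ?case by (simp add: vm_add)
qed (auto simp: vec_eq_iff vector_matrix_mult_def)

lemma mu_inner_alt: "mu_inner mu M M' = (\<Sum>i\<in>UNIV. \<Sum>j\<in>UNIV. M$i$j * mu$j * M'$i$j)"
  unfolding mu_inner_def trace_def mm_diag
  by (simp add: matrix_matrix_mult_def transpose_def)

definition Sm :: "real^'n::finite \<Rightarrow> real^'n^'r::finite \<Rightarrow> real^'n^'r" where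
  "Sm mu M = (\<chi> i j. sqrt (mu$j) * M$i$j)"

lemma mu_inner_Sm: "(\<forall>j. mu$j > 0) \<Longrightarrow> mu_inner mu M M' = Sm mu M \<bullet> Sm mu M'"
  unfolding mu_inner_alt Sm_def inner_vec_def
  by (rule sum.cong[OF refl], rule sum.cong[OF refl]) (simp add: less_imp_le real_sqrt_mult[symmetric])
lemma Sm_diff: "Sm mu (M - M') = Sm mu M - Sm mu M'" by (simp add: Sm_def vec_eq_iff algebra_simps)
lemma Sm_add: "Sm mu (M + M') = Sm mu M + Sm mu M'" by (simp add: Sm_def vec_eq_iff algebra_simps)
lemma Sm_scaleR: "Sm mu (c *\<^sub>R M) = c *\<^sub>R Sm mu M" by (simp add: Sm_def vec_eq_iff algebra_simps)

lemma mu_inner_comm: "mu_inner mu M M' = mu_inner mu M' M"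
  unfolding mu_inner_alt by (simp add: mult_ac)
lemma mu_inner_outer1: "mu_inner mu M (outer mu ones) = mu \<bullet> (M *v mu)"
  unfolding mu_inner_alt by (simp add: outer_def ones_def inner_vec_def matrix_vector_mult_def sum_distrib_left mult_ac)
lemma mu_inner_outer11: "mu_inner mu (outer mu ones) (outer mu ones) = (mu \<bullet> mu) * (\<Sum>j\<in>UNIV. mu$j)"
  unfolding mu_inner_alt by (simp add: outer_def ones_def inner_vec_def sum_distrib_left sum_distrib_right mult_ac)
lemma mu_inner_J: "mu_inner mu (M::real^'n::finite^'t::finite) (c *\<^sub>R outer ones ones) = c * (\<Sum>j\<in>UNIV. mu$j * (\<Sum>t\<in>UNIV. M$t$j))"
  unfolding mu_inner_alt
  by (simp add: outer_def ones_def sum_distrib_left sum_distrib_right mult_ac sum.swap[of _ "UNIV::'t set"])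
lemma mu_inner_JJ: "mu_inner mu (c *\<^sub>R outer ones ones :: real^'n::finite^'t::finite) (c *\<^sub>R outer ones ones) = c * c * real CARD('t) * (\<Sum>j\<in>UNIV. mu$j)"
  unfolding mu_inner_alt
  by (simp add: outer_def ones_def sum_distrib_left sum_distrib_right mult_ac)

lemma sum_triple:
  fixes F :: "('t::finite \<Rightarrow> 'n::finite) \<times> 'n \<times> 'n \<Rightarrow> 'b::comm_monoid_add"
  shows "(\<Sum>s\<in>UNIV. F s) = (\<Sum>xs\<in>UNIV. \<Sum>k\<in>UNIV. \<Sum>xo\<in>UNIV. F (xs, k, xo))"
proof -
  have "(\<Sum>s\<in>UNIV. F s) = (\<Sum>(xs,ko)\<in>UNIV \<times> (UNIV \<times> UNIV). F (xs, ko))" by simp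
  also have "\<dots> = (\<Sum>xs\<in>UNIV. \<Sum>ko\<in>UNIV \<times> UNIV. F (xs, ko))" by (rule sum.cartesian_product[symmetric])
  also have "\<dots> = (\<Sum>xs\<in>UNIV. \<Sum>k\<in>UNIV. \<Sum>xo\<in>UNIV. F (xs, k, xo))"
  proof (rule sum.cong[OF refl])
    fix xs
    have "(\<Sum>ko\<in>UNIV \<times> UNIV. F (xs, ko)) = (\<Sum>(k,xo)\<in>UNIV \<times> UNIV. F (xs, k, xo))" by simp
    also have "\<dots> = (\<Sum>k\<in>UNIV. \<Sum>xo\<in>UNIV. F (xs, k, xo))" by (rule sum.cartesian_product[symmetric])
    finally show "(\<Sum>ko\<in>UNIV \<times> UNIV. F (xs, ko)) = (\<Sum>k\<in>UNIV. \<Sum>xo\<in>UNIV. F (xs, k, xo))" .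
  qed
  finally show ?thesis .
qed

lemma gradV_formula:
  "grad (\<lambda>V'. loss V' A (xs, k, xo)) V = - outer (axis xo 1 - V *v (Xmat xs *v column k A)) (Xmat xs *v column k A)"
proof -
  have "(\<lambda>V'. loss V' A (xs, k, xo)) = (\<lambda>V'. 1/2 * (norm (axis xo 1 - mat 1 *v (V' *v (Xmat xs *v column k A))))\<^sup>2)"
    by (simp add: loss_def matrix_vector_mul_assoc matrix_mul_assoc matrix_vector_mult_basis[symmetric] matrix_mul_lid)
  then show ?thesis using grad_quad[of "axis xo 1" "mat 1" "Xmat xs *v column k A" V]
    by (simp add: matrix_vector_mul_lid vector_matrix_mul_rid)
qed

lemma gradA_formula:
  "grad (\<lambda>A'. loss V A' (xs, k, xo)) A = - outer ((axis xo 1 - (V ** Xmat xs) *v (A *v axis k 1)) v* (V ** Xmat xs)) (axis k 1)"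
proof -
  have "(\<lambda>A'. loss V A' (xs, k, xo)) = (\<lambda>A'. 1/2 * (norm (axis xo 1 - (V ** Xmat xs) *v (A' *v axis k 1)))\<^sup>2)"
    by (simp add: loss_def matrix_vector_mul_assoc)
  then show ?thesis using grad_quad[of "axis xo 1" "V ** Xmat xs" "axis k 1" A]
    by simp
qed

lemma cvec: "(P *v (Xmat xs *v column k Q)) $ xo = (\<Sum>t\<in>UNIV. Q $ t $ k * P $ xo $ xs t)"
proof -
  have "(P *v (Xmat xs *v column k Q)) $ xo = (\<Sum>n\<in>UNIV. \<Sum>t\<in>UNIV. P $ xo $ n * ((if xs t = n then 1 else 0) * Q $ t $ k))"
    by (simp add: matrix_vector_mult_def Xmat_def column_def sum_distrib_left)
  also have "\<dots> = (\<Sum>t\<in>UNIV. \<Sum>n\<in>UNIV. P $ xo $ n * ((if xs t = n then 1 else 0) * Q $ t $ k))"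
    by (rule sum.swap)
  also have "\<dots> = (\<Sum>t\<in>UNIV. Q $ t $ k * P $ xo $ xs t)"
  proof (rule sum.cong[OF refl])
    fix t
    have "\<And>n. P $ xo $ n * ((if xs t = n then 1 else 0) * Q $ t $ k) = (if n = xs t then Q $ t $ k * P $ xo $ xs t else 0)"
      by auto
    then show "(\<Sum>n\<in>UNIV. P $ xo $ n * ((if xs t = n then 1 else 0) * Q $ t $ k)) = Q $ t $ k * P $ xo $ xs t"
      by simp
  qed
  finally show ?thesis .
qed

lemma csum:
  assumes "\<forall>j. (\<Sum>i\<in>UNIV. P $ i $ j) = 1" "\<forall>k. (\<Sum>t\<in>UNIV. Q $ t $ k) = 1"
  shows "(\<Sum>xo\<in>UNIV. (P *v (Xmat xs *v column k Q)) $ xo) = 1"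
proof -
  have "(\<Sum>xo\<in>UNIV. (P *v (Xmat xs *v column k Q)) $ xo) = (\<Sum>t\<in>UNIV. Q $ t $ k * (\<Sum>xo\<in>UNIV. P $ xo $ xs t))"
    unfolding cvec by (subst sum.swap) (simp add: sum_distrib_left)
  also have "\<dots> = 1" using assms by simp
  finally show ?thesis .
qed

lemma cond_o:
  fixes c z :: "real^'n::finite" and u :: "real^'m::finite"
  shows "(\<Sum>xo\<in>UNIV. (w * c $ xo) *\<^sub>R outer (axis xo 1 - z) u) = w *\<^sub>R (outer c u - (\<Sum>xo\<in>UNIV. c $ xo) *\<^sub>R outer z u)"
proof (rule vec_eq_iff[THEN iffD2], intro allI, rule vec_eq_iff[THEN iffD2], intro allI)
  fix i j
  have "(\<Sum>xo\<in>UNIV. (w * c $ xo) *\<^sub>R outer (axis xo 1 - z) u) $ i $ j = (\<Sum>xo\<in>UNIV. w * c$xo * ((if i = xo then 1 else 0) - z$i) * u$j)"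
    by (simp add: sum_component outer_def axis_def mult_ac)
  also have "\<dots> = (\<Sum>xo\<in>UNIV. (if xo = i then w*c$i*u$j else 0) - w*u$j*z$i * c$xo)"
    by (rule sum.cong) (auto simp: algebra_simps)
  also have "\<dots> = w*c$i*u$j - w*u$j*z$i * (\<Sum>xo\<in>UNIV. c$xo)"
    by (simp add: sum_subtractf sum_distrib_left)
  also have "\<dots> = (w *\<^sub>R (outer c u - (\<Sum>xo\<in>UNIV. c $ xo) *\<^sub>R outer z u)) $ i $ j"
    by (simp add: outer_def algebra_simps)
  finally show "(\<Sum>xo\<in>UNIV. (w * c $ xo) *\<^sub>R outer (axis xo 1 - z) u) $ i $ j = (w *\<^sub>R (outer c u - (\<Sum>xo\<in>UNIV. c $ xo) *\<^sub>R outer z u)) $ i $ j" .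
qed

lemma EGV_k:
  fixes mu :: "real^'n::finite" and P V :: "real^'n^'n" and Q A :: "real^'n^'t::finite"
  assumes mu_sum: "(\<Sum>i\<in>UNIV. mu $ i) = 1"
    and P_col: "\<forall>j. (\<Sum>i\<in>UNIV. P $ i $ j) = 1"
    and Q_col: "\<forall>k. (\<Sum>t\<in>UNIV. Q $ t $ k) = 1"
  shows "(\<Sum>xs\<in>(UNIV::('t\<Rightarrow>'n) set). \<Sum>xo\<in>UNIV. sample_prob mu P Q (xs, k, xo) *\<^sub>R grad (\<lambda>V'. loss V' A (xs, k, xo)) V)
    = - (mu $ k) *\<^sub>R (P ** ((column k Q \<bullet> column k A) *\<^sub>R (diag_vec mu - outer mu mu) + ((\<Sum>t\<in>UNIV. column k Q $ t) * (\<Sum>t\<in>UNIV. column k A $ t)) *\<^sub>R outer mu mu)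
        - V ** ((column k A \<bullet> column k A) *\<^sub>R (diag_vec mu - outer mu mu) + ((\<Sum>t\<in>UNIV. column k A $ t) * (\<Sum>t\<in>UNIV. column k A $ t)) *\<^sub>R outer mu mu))"
proof -
  define pm where "pm = (\<lambda>xs::'t\<Rightarrow>'n. \<Prod>t\<in>UNIV. mu $ xs t)"
  define a where "a = column k A"
  define q where "q = column k Q"
  have step: "(\<Sum>xo\<in>UNIV. sample_prob mu P Q (xs, k, xo) *\<^sub>R grad (\<lambda>V'. loss V' A (xs, k, xo)) V)
      = - (mu $ k) *\<^sub>R (pm xs *\<^sub>R (P ** outer (Xmat xs *v q) (Xmat xs *v a)) - pm xs *\<^sub>R (V ** outer (Xmat xs *v a) (Xmat xs *v a)))" for xs
  proof -
    define c where "c = P *v (Xmat xs *v q)"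
    have "(\<Sum>xo\<in>UNIV. sample_prob mu P Q (xs, k, xo) *\<^sub>R grad (\<lambda>V'. loss V' A (xs, k, xo)) V)
        = - (\<Sum>xo\<in>UNIV. (pm xs * mu $ k * c $ xo) *\<^sub>R outer (axis xo 1 - V *v (Xmat xs *v a)) (Xmat xs *v a))"
      unfolding sum_negf[symmetric]
      by (rule sum.cong[OF refl]) (simp add: sample_prob_def gradV_formula c_def cvec pm_def a_def q_def)
    also have "\<dots> = - (pm xs * mu $ k) *\<^sub>R (outer c (Xmat xs *v a) - outer (V *v (Xmat xs *v a)) (Xmat xs *v a))"
      using cond_o[of "pm xs * mu $ k" c "V *v (Xmat xs *v a)" "Xmat xs *v a"] csum[OF P_col Q_col, of xs k]
      by (simp add: c_def q_def)
    finally show ?thesis by (simp add: c_def outer_mm algebra_simps)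
  qed
  have "(\<Sum>xs\<in>(UNIV::('t\<Rightarrow>'n) set). \<Sum>xo\<in>UNIV. sample_prob mu P Q (xs, k, xo) *\<^sub>R grad (\<lambda>V'. loss V' A (xs, k, xo)) V)
     = - (mu $ k) *\<^sub>R (P ** (\<Sum>xs\<in>UNIV. pm xs *\<^sub>R outer (Xmat xs *v q) (Xmat xs *v a)) - V ** (\<Sum>xs\<in>UNIV. pm xs *\<^sub>R outer (Xmat xs *v a) (Xmat xs *v a)))"
    unfolding step mm_sum_left by (simp only: sum_negf scaleR_sum_right[symmetric] sum_subtractf)
  also have "\<dots> = - (mu $ k) *\<^sub>R (P ** ((q \<bullet> a) *\<^sub>R (diag_vec mu - outer mu mu) + ((\<Sum>t\<in>UNIV. q $ t) * (\<Sum>t\<in>UNIV. a $ t)) *\<^sub>R outer mu mu)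
        - V ** ((a \<bullet> a) *\<^sub>R (diag_vec mu - outer mu mu) + ((\<Sum>t\<in>UNIV. a $ t) * (\<Sum>t\<in>UNIV. a $ t)) *\<^sub>R outer mu mu))"
    unfolding pm_def EK[OF mu_sum] ..
  finally show ?thesis unfolding a_def q_def .
qed

lemma ones_dot: "(ones::real^'n::finite) \<bullet> mu = (\<Sum>i\<in>UNIV. mu $ i)"
  by (simp add: ones_def inner_vec_def)
lemma dot_ones: "mu \<bullet> (ones::real^'n::finite) = (\<Sum>i\<in>UNIV. mu $ i)"
  by (simp add: ones_def inner_vec_def)

lemma preV_term:
  fixes mu :: "real^'n::finite" and M :: "real^'n^'n"
  assumes mu_pos: "\<forall>i. mu $ i > 0" and mu_sum: "(\<Sum>i\<in>UNIV. mu $ i) = 1"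
    and Mmu: "M *v mu = mu" and Mcol: "ones v* M = ones"
  shows "(mat 1 - (1 / real CARD('n)) *\<^sub>R outer ones ones) ** (M ** diag_vec mu - outer mu mu)
     ** diag_vec (\<chi> i. 1 / mu $ i) ** (mat 1 - (1 / (mu \<bullet> mu)) *\<^sub>R outer mu mu) = M - outer mu ones"
proof -
  have v1: "ones v* (M ** diag_vec mu - outer mu mu) = 0"
    by (simp add: vector_matrix_mult_diff_rdistrib vector_matrix_mul_assoc[symmetric] Mcol vm_outer ones_dot mu_sum)
       (simp add: vec_eq_iff vector_matrix_mult_def diag_vec_def ones_def)
  have s1: "(mat 1 - (1 / real CARD('n)) *\<^sub>R outer ones ones) ** (M ** diag_vec mu - outer mu mu) = M ** diag_vec mu - outer mu mu"
    by (simp add: mm_diff_right mm_scale_right outer_mm_left v1 matrix_mul_lid)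
         (simp add: outer_def vec_eq_iff)
  have s2: "(M ** diag_vec mu - outer mu mu) ** diag_vec (\<chi> i. 1 / mu $ i) = M - outer mu ones"
  proof -
    have "\<And>i j. (M $ i $ j * mu $ j - mu $ i * mu $ j) / mu $ j = M $ i $ j - mu $ i"
      using mu_pos by (metis less_irrefl left_diff_distrib nonzero_mult_div_cancel_right)
    then show ?thesis by (simp add: mm_diff_right mm_diag outer_def ones_def vec_eq_iff)
  qed
  have v2: "(M - outer mu ones) *v mu = 0"
    by (simp add: matrix_vector_mult_diff_rdistrib Mmu outer_mv ones_dot mu_sum)
  have s3: "(M - outer mu ones) ** (mat 1 - (1 / (mu \<bullet> mu)) *\<^sub>R outer mu mu) = M - outer mu ones"
    by (simp add: mm_diff_left mm_scale_left outer_mm v2 matrix_mul_rid) (simp add: outer_def vec_eq_iff)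
  show ?thesis using s1 s2 s3 by simp
qed

lemma mu_norm2_cols: "mu_norm2 mu (A::real^'n::finite^'t::finite) = (\<Sum>k\<in>UNIV. mu $ k * (column k A \<bullet> column k A))"
  unfolding mu_norm2_def mu_inner_alt
  by (subst sum.swap) (simp add: column_def inner_vec_def sum_distrib_left mult_ac)
lemma mu_inner_cols: "mu_inner mu (A::real^'n::finite^'t::finite) Q = (\<Sum>k\<in>UNIV. mu $ k * (column k Q \<bullet> column k A))"
  unfolding mu_inner_alt
  by (subst sum.swap) (simp add: column_def inner_vec_def sum_distrib_left mult_ac)

lemma EG_V:
  fixes mu :: "real^'n::finite" and P V :: "real^'n^'n" and Q A :: "real^'n^'t::finite"
  assumes mu_sum: "(\<Sum>i\<in>UNIV. mu $ i) = 1"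
    and P_col: "\<forall>j. (\<Sum>i\<in>UNIV. P $ i $ j) = 1"
    and P_mu: "P *v mu = mu"
    and Q_col: "\<forall>k. (\<Sum>t\<in>UNIV. Q $ t $ k) = 1"
    and A_col: "ones v* A = ones"
    and V_mu: "V *v mu = mu"
  shows "(\<Sum>s\<in>UNIV. sample_prob mu P Q s *\<^sub>R grad (\<lambda>V'. loss V' A s) V)
     = mu_norm2 mu A *\<^sub>R (V ** diag_vec mu - outer mu mu) - mu_inner mu A Q *\<^sub>R (P ** diag_vec mu - outer mu mu)"
proof -
  have Acol: "(\<Sum>t\<in>UNIV. column k A $ t) = 1" for k
    using A_col by (simp add: vec_eq_iff vector_matrix_mult_def ones_def column_def mult.commute)
  have Qcol: "(\<Sum>t\<in>UNIV. column k Q $ t) = 1" for k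
    using Q_col by (simp add: column_def)
  have "(\<Sum>s\<in>UNIV. sample_prob mu P Q s *\<^sub>R grad (\<lambda>V'. loss V' A s) V)
     = (\<Sum>k\<in>UNIV. \<Sum>xs\<in>(UNIV::('t\<Rightarrow>'n) set). \<Sum>xo\<in>UNIV. sample_prob mu P Q (xs, k, xo) *\<^sub>R grad (\<lambda>V'. loss V' A (xs, k, xo)) V)"
    unfolding sum_triple by (rule sum.swap)
  also have "\<dots> = (\<Sum>k\<in>UNIV. (mu $ k * (column k A \<bullet> column k A)) *\<^sub>R (V ** diag_vec mu - outer mu mu)
        - (mu $ k * (column k Q \<bullet> column k A)) *\<^sub>R (P ** diag_vec mu - outer mu mu))"
  proof (rule sum.cong[OF refl])
    fix k
    show "(\<Sum>xs\<in>(UNIV::('t\<Rightarrow>'n) set). \<Sum>xo\<in>UNIV. sample_prob mu P Q (xs, k, xo) *\<^sub>R grad (\<lambda>V'. loss V' A (xs, k, xo)) V)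
      = (mu $ k * (column k A \<bullet> column k A)) *\<^sub>R (V ** diag_vec mu - outer mu mu)
        - (mu $ k * (column k Q \<bullet> column k A)) *\<^sub>R (P ** diag_vec mu - outer mu mu)"
      unfolding EGV_k[OF mu_sum P_col Q_col] Acol Qcol
      by (simp add: matrix_add_ldistrib mm_diff_left mm_scale_left outer_mm P_mu V_mu algebra_simps)
  qed
  also have "\<dots> = mu_norm2 mu A *\<^sub>R (V ** diag_vec mu - outer mu mu) - mu_inner mu A Q *\<^sub>R (P ** diag_vec mu - outer mu mu)"
    unfolding mu_norm2_cols mu_inner_cols sum_subtractf scaleR_sum_left ..
  finally show ?thesis .
qed

lemma EpgradV_closed:
  fixes mu :: "real^'n::finite" and P V :: "real^'n^'n" and Q A :: "real^'n^'t::finite"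
  assumes mu_pos: "\<forall>i. mu $ i > 0"
    and mu_sum: "(\<Sum>i\<in>UNIV. mu $ i) = 1"
    and P_col: "\<forall>j. (\<Sum>i\<in>UNIV. P $ i $ j) = 1"
    and P_mu: "P *v mu = mu"
    and Q_col: "\<forall>k. (\<Sum>t\<in>UNIV. Q $ t $ k) = 1"
    and A_col: "ones v* A = ones"
    and V_col: "ones v* V = ones"
    and V_mu: "V *v mu = mu"
  shows "EpgradV mu P Q V A = mu_norm2 mu A *\<^sub>R (V - outer mu ones) - mu_inner mu A Q *\<^sub>R (P - outer mu ones)"
proof -
  have Pc: "ones v* P = ones"
    using P_col by (simp add: vec_eq_iff vector_matrix_mult_def ones_def)
  define L :: "real^'n^'n" where "L = mat 1 - (1 / real CARD('n)) *\<^sub>R outer ones ones"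
  define Di :: "real^'n^'n" where "Di = diag_vec (\<chi> i. 1 / mu $ i)"
  define R :: "real^'n^'n" where "R = mat 1 - (1 / (mu \<bullet> mu)) *\<^sub>R outer mu mu"
  have "EpgradV mu P Q V A = (\<Sum>s\<in>UNIV. sample_prob mu P Q s *\<^sub>R (L ** grad (\<lambda>V'. loss V' A s) V ** Di ** R))"
    unfolding EpgradV_def pgradV_def L_def Di_def R_def ..
  also have "\<dots> = L ** (\<Sum>s\<in>UNIV. sample_prob mu P Q s *\<^sub>R grad (\<lambda>V'. loss V' A s) V) ** Di ** R"
    by (simp only: mm_sum_right[symmetric] mm_sum_left[symmetric])
  also have "\<dots> = mu_norm2 mu A *\<^sub>R (L ** (V ** diag_vec mu - outer mu mu) ** Di ** R) - mu_inner mu A Q *\<^sub>R (L ** (P ** diag_vec mu - outer mu mu) ** Di ** R)"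
    unfolding EG_V[OF mu_sum P_col P_mu Q_col A_col V_mu]
    by (simp only: mm_diff_left mm_scale_left mm_diff_right mm_scale_right)
  also have "\<dots> = mu_norm2 mu A *\<^sub>R (V - outer mu ones) - mu_inner mu A Q *\<^sub>R (P - outer mu ones)"
    unfolding L_def Di_def R_def preV_term[OF mu_pos mu_sum V_mu V_col] preV_term[OF mu_pos mu_sum P_mu Pc] ..
  finally show ?thesis .
qed

lemma cond_o2:
  fixes c z :: "real^'n::finite" and M :: "real^'m::finite^'n"
  shows "(\<Sum>xo\<in>UNIV. (w * c $ xo) *\<^sub>R ((axis xo 1 - z) v* M)) = w *\<^sub>R ((c - (\<Sum>xo\<in>UNIV. c $ xo) *\<^sub>R z) v* M)"
proof -
  have "(\<Sum>xo\<in>UNIV. (w * c $ xo) *\<^sub>R ((axis xo 1 - z) v* M)) = (\<Sum>xo\<in>UNIV. (w * c $ xo) *\<^sub>R (axis xo 1 - z)) v* M"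
    by (simp add: vm_sum[symmetric] vector_scaleR_matrix_ac[symmetric] vec_eq_iff vector_matrix_mult_def sum_component sum_distrib_left sum_distrib_right mult_ac)
       (subst sum.swap, simp add: sum_distrib_left mult_ac)
  also have "(\<Sum>xo\<in>UNIV. (w * c $ xo) *\<^sub>R (axis xo 1 - z)) = w *\<^sub>R (c - (\<Sum>xo\<in>UNIV. c $ xo) *\<^sub>R z)"
  proof (rule vec_eq_iff[THEN iffD2], intro allI)
    fix i
    have "(\<Sum>xo\<in>UNIV. (w * c $ xo) *\<^sub>R (axis xo 1 - z)) $ i = (\<Sum>xo\<in>UNIV. (if xo = i then w * c $ i else 0) - w * z $ i * c $ xo)"
      by (simp add: sum_component axis_def) (rule sum.cong, auto simp: algebra_simps)
    also have "\<dots> = (w *\<^sub>R (c - (\<Sum>xo\<in>UNIV. c $ xo) *\<^sub>R z)) $ i"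
      by (simp add: sum_subtractf sum_distrib_left algebra_simps)
    finally show "(\<Sum>xo\<in>UNIV. (w * c $ xo) *\<^sub>R (axis xo 1 - z)) $ i = (w *\<^sub>R (c - (\<Sum>xo\<in>UNIV. c $ xo) *\<^sub>R z)) $ i" .
  qed
  finally show ?thesis by (simp add: vec_eq_iff vector_matrix_mult_def sum_distrib_left mult_ac)
qed

lemma vM: "(y v* (V ** Xmat xs)) $ t = V \<bullet> outer y (Xmat xs *v axis t 1)"
  by (simp add: matrix_vector_mult_basis vector_matrix_mult_def matrix_matrix_mult_def inner_vec_def outer_def column_def sum_distrib_left mult_ac)


lemma EGA_entry:
  fixes mu :: "real^'n::finite" and P V :: "real^'n^'n" and Q A :: "real^'n^'t::finite"
  assumes mu_sum: "(\<Sum>i\<in>UNIV. mu $ i) = 1"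
    and P_col: "\<forall>j. (\<Sum>i\<in>UNIV. P $ i $ j) = 1"
    and Q_col: "\<forall>k. (\<Sum>t\<in>UNIV. Q $ t $ k) = 1"
  shows "(\<Sum>s\<in>UNIV. sample_prob mu P Q s *\<^sub>R grad (\<lambda>A'. loss V A' s) A) $ t $ k
     = - (mu $ k) * (V \<bullet> (P ** ((column k Q \<bullet> axis t 1) *\<^sub>R (diag_vec mu - outer mu mu) + ((\<Sum>i\<in>UNIV. column k Q $ i) * (\<Sum>i\<in>UNIV. axis t 1 $ i)) *\<^sub>R outer mu mu)
          - V ** ((column k A \<bullet> axis t 1) *\<^sub>R (diag_vec mu - outer mu mu) + ((\<Sum>i\<in>UNIV. column k A $ i) * (\<Sum>i\<in>UNIV. axis t 1 $ i)) *\<^sub>R outer mu mu)))"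
proof -
  define pm where "pm = (\<lambda>xs::'t\<Rightarrow>'n. \<Prod>t\<in>UNIV. mu $ xs t)"
  define a where "a = column k A"
  define q where "q = column k Q"
  define et :: "real^'t" where "et = axis t 1"
  define w where "w = (\<lambda>xs k xo. (axis xo 1 - (V ** Xmat xs) *v (A *v axis k 1)) v* (V ** Xmat (xs::'t\<Rightarrow>'n)))"
  have "(\<Sum>s\<in>UNIV. sample_prob mu P Q s *\<^sub>R grad (\<lambda>A'. loss V A' s) A) $ t $ k
      = (\<Sum>xs\<in>UNIV. \<Sum>k'\<in>UNIV. \<Sum>xo\<in>UNIV. - (sample_prob mu P Q (xs, k', xo) * w xs k' xo $ t * (if k = k' then 1 else 0)))"
    unfolding sum_triple by (simp add: sum_component gradA_formula w_def outer_def axis_def mult_ac)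
  also have "\<dots> = (\<Sum>xs\<in>UNIV. - (\<Sum>xo\<in>UNIV. sample_prob mu P Q (xs, k, xo) *\<^sub>R w xs k xo) $ t)"
  proof (rule sum.cong[OF refl])
    fix xs
    have "\<And>k'. (\<Sum>xo\<in>UNIV. - (sample_prob mu P Q (xs, k', xo) * w xs k' xo $ t * (if k = k' then 1 else 0)))
       = (if k' = k then - (\<Sum>xo\<in>UNIV. sample_prob mu P Q (xs, k, xo) *\<^sub>R w xs k xo) $ t else 0)"
      by (auto simp: sum_component sum_negf)
    then show "(\<Sum>k'\<in>UNIV. \<Sum>xo\<in>UNIV. - (sample_prob mu P Q (xs, k', xo) * w xs k' xo $ t * (if k = k' then 1 else 0)))
       = - (\<Sum>xo\<in>UNIV. sample_prob mu P Q (xs, k, xo) *\<^sub>R w xs k xo) $ t" by simp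
  qed
  also have "\<dots> = (\<Sum>xs\<in>UNIV. - (mu $ k) * (pm xs * (V \<bullet> (P ** outer (Xmat xs *v q) (Xmat xs *v et) - V ** outer (Xmat xs *v a) (Xmat xs *v et)))))"
  proof (rule sum.cong[OF refl])
    fix xs
    define c where "c = P *v (Xmat xs *v q)"
    have "(\<Sum>xo\<in>UNIV. sample_prob mu P Q (xs, k, xo) *\<^sub>R w xs k xo) = (\<Sum>xo\<in>UNIV. (pm xs * mu $ k * c $ xo) *\<^sub>R ((axis xo 1 - (V ** Xmat xs) *v (A *v axis k 1)) v* (V ** Xmat xs)))"
      by (rule sum.cong[OF refl]) (simp add: sample_prob_def w_def c_def cvec pm_def q_def)
    also have "\<dots> = (pm xs * mu $ k) *\<^sub>R ((c - (V ** Xmat xs) *v (A *v axis k 1)) v* (V ** Xmat xs))"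
    proof -
      have s: "(\<Sum>xo\<in>UNIV. c $ xo) = 1" using csum[OF P_col Q_col, of xs k] by (simp add: c_def q_def)
      show ?thesis using cond_o2[of "pm xs * mu $ k" c "(V ** Xmat xs) *v (A *v axis k 1)" "V ** Xmat xs"] unfolding s by simp
    qed
    finally have that: "(\<Sum>xo\<in>UNIV. sample_prob mu P Q (xs, k, xo) *\<^sub>R w xs k xo) $ t = (pm xs * mu $ k) * (V \<bullet> outer (c - V *v (Xmat xs *v a)) (Xmat xs *v et))"
      by (simp add: vM et_def a_def matrix_vector_mul_assoc matrix_vector_mult_basis)
    show "- (\<Sum>xo\<in>UNIV. sample_prob mu P Q (xs, k, xo) *\<^sub>R w xs k xo) $ t = - (mu $ k) * (pm xs * (V \<bullet> (P ** outer (Xmat xs *v q) (Xmat xs *v et) - V ** outer (Xmat xs *v a) (Xmat xs *v et))))"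
    proof -
      have eq: "outer (c - V *v (Xmat xs *v a)) (Xmat xs *v et) = P ** outer (Xmat xs *v q) (Xmat xs *v et) - V ** outer (Xmat xs *v a) (Xmat xs *v et)"
        unfolding c_def outer_mm by (simp add: outer_def vec_eq_iff algebra_simps)
      show ?thesis using that unfolding eq[symmetric] by simp
    qed
  qed
  also have "\<dots> = - (mu $ k) * (V \<bullet> (P ** (\<Sum>xs\<in>UNIV. pm xs *\<^sub>R outer (Xmat xs *v q) (Xmat xs *v et)) - V ** (\<Sum>xs\<in>UNIV. pm xs *\<^sub>R outer (Xmat xs *v a) (Xmat xs *v et))))"
    unfolding mm_sum_left
    unfolding scaleR_diff_right[symmetric] sum_subtractf[symmetric]
    by (simp add: inner_sum_right sum_distrib_left sum_negf)
  also have "\<dots> = - (mu $ k) * (V \<bullet> (P ** ((q \<bullet> et) *\<^sub>R (diag_vec mu - outer mu mu) + ((\<Sum>i\<in>UNIV. q $ i) * (\<Sum>i\<in>UNIV. et $ i)) *\<^sub>R outer mu mu)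
          - V ** ((a \<bullet> et) *\<^sub>R (diag_vec mu - outer mu mu) + ((\<Sum>i\<in>UNIV. a $ i) * (\<Sum>i\<in>UNIV. et $ i)) *\<^sub>R outer mu mu)))"
    unfolding pm_def EK[OF mu_sum] ..
  finally show ?thesis unfolding a_def q_def et_def .
qed


lemma V_dot_D: "V \<bullet> (P ** diag_vec mu) = mu_inner mu V P"
  by (simp add: mm_diag mu_inner_alt inner_vec_def mult_ac)
lemma V_dot_mm: "V \<bullet> outer mu mu = mu \<bullet> (V *v mu)"
  by (simp add: outer_def inner_vec_def matrix_vector_mult_def sum_distrib_left mult_ac)

lemma EGA_closed:
  fixes mu :: "real^'n::finite" and P V :: "real^'n^'n" and Q A :: "real^'n^'t::finite"
  assumes mu_sum: "(\<Sum>i\<in>UNIV. mu $ i) = 1"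
    and P_col: "\<forall>j. (\<Sum>i\<in>UNIV. P $ i $ j) = 1"
    and P_mu: "P *v mu = mu"
    and Q_col: "\<forall>k. (\<Sum>t\<in>UNIV. Q $ t $ k) = 1"
    and A_col: "ones v* A = ones"
    and V_mu: "V *v mu = mu"
  shows "(\<Sum>s\<in>UNIV. sample_prob mu P Q s *\<^sub>R grad (\<lambda>A'. loss V A' s) A) $ t $ k
     = - (mu $ k) * (Q $ t $ k * (mu_inner mu V P - mu \<bullet> mu) - A $ t $ k * (mu_norm2 mu V - mu \<bullet> mu))"
proof -
  have Acol: "(\<Sum>i\<in>UNIV. column k A $ i) = 1"
    using A_col by (simp add: vec_eq_iff vector_matrix_mult_def ones_def column_def mult.commute)
  have Qcol: "(\<Sum>i\<in>UNIV. column k Q $ i) = 1"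
    using Q_col by (simp add: column_def)
  have ax: "(\<Sum>i\<in>UNIV. (axis t 1 :: real^'t) $ i) = 1" by (simp add: axis_def)
  have cq: "column k Q \<bullet> axis t 1 = Q $ t $ k" by (simp add: column_def inner_axis)
  have ca: "column k A \<bullet> axis t 1 = A $ t $ k" by (simp add: column_def inner_axis)
  show ?thesis
    unfolding EGA_entry[OF mu_sum P_col Q_col] Acol Qcol ax cq ca
    by (simp add: matrix_add_ldistrib mm_diff_left mm_scale_left outer_mm P_mu V_mu inner_diff_right inner_add_right
        V_dot_D V_dot_mm mu_norm2_def algebra_simps)
qed

lemma LT_mv: "((mat 1 - c *\<^sub>R outer ones ones) *v x) $ t = x $ t - c * (\<Sum>r\<in>UNIV. x $ r)"
  by (simp add: matrix_vector_mult_diff_rdistrib matrix_vector_mul_lid outer_mv ones_dot scaleR_matrix_vector_assoc[symmetric])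
     (simp add: ones_def)

lemma EpgradA_closed:
  fixes mu :: "real^'n::finite" and P V :: "real^'n^'n" and Q A :: "real^'n^'t::finite"
  assumes mu_pos: "\<forall>i. mu $ i > 0"
    and mu_sum: "(\<Sum>i\<in>UNIV. mu $ i) = 1"
    and P_col: "\<forall>j. (\<Sum>i\<in>UNIV. P $ i $ j) = 1"
    and P_mu: "P *v mu = mu"
    and Q_col: "\<forall>k. (\<Sum>t\<in>UNIV. Q $ t $ k) = 1"
    and A_col: "ones v* A = ones"
    and V_mu: "V *v mu = mu"
  shows "EpgradA mu P Q V A = (mu_norm2 mu V - mu \<bullet> mu) *\<^sub>R (A - (1 / real CARD('t)) *\<^sub>R outer ones ones)
       - (mu_inner mu V P - mu \<bullet> mu) *\<^sub>R (Q - (1 / real CARD('t)) *\<^sub>R outer ones ones)"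
proof (rule vec_eq_iff[THEN iffD2], intro allI, rule vec_eq_iff[THEN iffD2], intro allI)
  fix t k
  define G where "G = (\<Sum>s\<in>UNIV. sample_prob mu P Q s *\<^sub>R grad (\<lambda>A'. loss V A' s) A)"
  define c where "c = 1 / real CARD('t)"
  define c1 where "c1 = mu_norm2 mu V - mu \<bullet> mu"
  define c2 where "c2 = mu_inner mu V P - mu \<bullet> mu"
  have Acol: "(\<Sum>r\<in>UNIV. A $ r $ k) = 1"
    using A_col by (simp add: vec_eq_iff vector_matrix_mult_def ones_def mult.commute)
  have Qcol: "(\<Sum>r\<in>UNIV. Q $ r $ k) = 1" using Q_col by simp
  have Gr: "\<And>r. G $ r $ k = - (mu $ k) * (Q $ r $ k * c2 - A $ r $ k * c1)"
    unfolding G_def c1_def c2_def by (rule EGA_closed[OF mu_sum P_col P_mu Q_col A_col V_mu])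
  have "EpgradA mu P Q V A $ t $ k = (\<Sum>s\<in>UNIV. sample_prob mu P Q s * ((1 / mu $ k) * (grad (\<lambda>A'. loss V A' s) A $ t $ k - c * (\<Sum>r\<in>UNIV. grad (\<lambda>A'. loss V A' s) A $ r $ k))))"
    unfolding EpgradA_def pgradA_def c_def by (simp add: sum_component LT_mv column_def)
  also have "\<dots> = (1 / mu $ k) * (G $ t $ k - c * (\<Sum>r\<in>UNIV. G $ r $ k))"
    unfolding G_def
    by (simp add: sum_component sum_distrib_left right_diff_distrib sum_subtractf algebra_simps)
       (subst sum.swap, simp add: sum_distrib_left mult_ac)
  also have "\<dots> = c1 * (A $ t $ k - c) - c2 * (Q $ t $ k - c)"
    unfolding Gr using mu_pos[rule_format, of k]
    by (simp add: sum_subtractf sum_distrib_left[symmetric] sum_distrib_right[symmetric] Acol Qcol field_simps)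
  finally show "EpgradA mu P Q V A $ t $ k = ((mu_norm2 mu V - mu \<bullet> mu) *\<^sub>R (A - (1 / real CARD('t)) *\<^sub>R outer ones ones)
       - (mu_inner mu V P - mu \<bullet> mu) *\<^sub>R (Q - (1 / real CARD('t)) *\<^sub>R outer ones ones)) $ t $ k"
    by (simp add: c_def c1_def c2_def outer_def ones_def)
qed


lemma mi_diff_left: "mu_inner mu (X - Y) Z = mu_inner mu X Z - mu_inner mu Y Z"
  unfolding mu_inner_alt by (simp add: sum_subtractf algebra_simps)
lemma mi_diff_right: "mu_inner mu Z (X - Y) = mu_inner mu Z X - mu_inner mu Z Y"
  unfolding mu_inner_alt by (simp add: sum_subtractf algebra_simps)
lemma mi_add_left: "mu_inner mu (X + Y) Z = mu_inner mu X Z + mu_inner mu Y Z"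
  unfolding mu_inner_alt by (simp add: sum.distrib algebra_simps)
lemma mi_add_right: "mu_inner mu Z (X + Y) = mu_inner mu Z X + mu_inner mu Z Y"
  unfolding mu_inner_alt by (simp add: sum.distrib algebra_simps)
lemma mi_scale_left: "mu_inner mu (c *\<^sub>R X) Z = c * mu_inner mu X Z"
  unfolding mu_inner_alt by (simp add: sum_distrib_left algebra_simps)
lemma mi_scale_right: "mu_inner mu Z (c *\<^sub>R X) = c * mu_inner mu Z X"
  unfolding mu_inner_alt by (simp add: sum_distrib_left algebra_simps)

lemma final_abstract:
  fixes mu :: "real^'n::finite" and X0 Pt h :: "real^'n^'r::finite" and K a b \<eta> :: real
  assumes mu_pos: "\<forall>i. mu $ i > 0"
    and K: "mu_inner mu Pt Pt = K" "K > 0"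
  shows "mu_norm2 mu ((X0 - \<eta> *\<^sub>R (a *\<^sub>R X0 - b *\<^sub>R Pt + h)) - (mu_inner mu (X0 - \<eta> *\<^sub>R (a *\<^sub>R X0 - b *\<^sub>R Pt + h)) Pt / K) *\<^sub>R Pt)
     = (1 - \<eta> * a)\<^sup>2 * mu_norm2 mu (X0 - (mu_inner mu X0 Pt / K) *\<^sub>R Pt)
       - 2 * \<eta> * (1 - \<eta> * a) * mu_inner mu (X0 - (mu_inner mu X0 Pt / K) *\<^sub>R Pt) h
       - \<eta>\<^sup>2 / K * (mu_inner mu h Pt)\<^sup>2 + \<eta>\<^sup>2 * mu_norm2 mu h"
proof -
  note mi = mu_inner_Sm[OF mu_pos]
  have K': "Sm mu Pt \<bullet> Sm mu Pt = K" using K(1) mi[of Pt Pt] by simp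
  show ?thesis
    unfolding mu_norm2_def mi Sm_diff Sm_add Sm_scaleR
    using proj_step[OF K' K(2), of "Sm mu X0" \<eta> a b "Sm mu h"] by simp
qed

lemma innerN1:
  fixes mu :: "real^'n::finite" and M P :: "real^'n^'n"
  assumes mu_sum: "(\<Sum>i\<in>UNIV. mu $ i) = 1" and "M *v mu = mu" "P *v mu = mu"
  shows "mu_inner mu M P - mu \<bullet> mu = mu_inner mu (M - outer mu ones) (P - outer mu ones)"
proof -
  have "mu_inner mu (outer mu ones) P = mu \<bullet> mu" using assms(3) mu_inner_comm[of mu "outer mu ones" P] mu_inner_outer1[of mu P] by simp
  then show ?thesis using assms
    by (simp add: mi_diff_left mi_diff_right mu_inner_outer1 mu_inner_outer11 matrix_vector_mult_diff_rdistrib outer_mv ones_dot)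
qed

lemma innerJ:
  fixes mu :: "real^'n::finite" and M Q :: "real^'n^'t::finite"
  assumes mu_sum: "(\<Sum>i\<in>UNIV. mu $ i) = 1" and Mc: "\<forall>k. (\<Sum>t\<in>UNIV. M $ t $ k) = 1" and Qc: "\<forall>k. (\<Sum>t\<in>UNIV. Q $ t $ k) = 1"
  shows "mu_inner mu M Q - 1 / real CARD('t) = mu_inner mu (M - (1 / real CARD('t)) *\<^sub>R outer ones ones) (Q - (1 / real CARD('t)) *\<^sub>R outer ones ones)"
proof -
  have T: "real CARD('t) > 0" by simp
  have a: "mu_inner mu M ((1 / real CARD('t)) *\<^sub>R outer ones ones) = 1 / real CARD('t)"
    using Mc mu_sum by (simp add: mu_inner_J)
  have b: "mu_inner mu ((1 / real CARD('t)) *\<^sub>R outer ones ones) Q = 1 / real CARD('t)"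
    using Qc mu_sum by (simp add: mu_inner_J mu_inner_comm[of mu _ Q])
  have c: "mu_inner mu ((1 / real CARD('t)) *\<^sub>R outer ones ones :: real^'n^'t) ((1 / real CARD('t)) *\<^sub>R outer ones ones) = 1 / real CARD('t)"
    using mu_sum T by (simp add: mu_inner_JJ power2_eq_square)
  show ?thesis using a b c by (simp add: mi_diff_left mi_diff_right)
qed

lemma pythag:
  fixes X Pt :: "real^'n::finite^'r::finite"
  assumes "mu_inner mu Pt Pt = K" "K > 0"
  shows "mu_norm2 mu X = (mu_inner mu X Pt / K)\<^sup>2 * K + mu_norm2 mu (X - (mu_inner mu X Pt / K) *\<^sub>R Pt)"
  using assms
  by (simp add: mu_norm2_def mi_diff_left mi_diff_right mi_scale_left mi_scale_right mu_inner_comm[of mu Pt X] power2_eq_square field_simps)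

lemma pgradV_mu:
  fixes mu :: "real^'n::finite"
  assumes "mu \<bullet> mu \<noteq> 0"
  shows "pgradV mu V A s *v mu = 0"
proof -
  have "(mat 1 - (1 / (mu \<bullet> mu)) *\<^sub>R outer mu mu) *v mu = 0"
    using assms by (simp add: matrix_vector_mult_diff_rdistrib matrix_vector_mul_lid scaleR_matrix_vector_assoc[symmetric] outer_mv)
  then show ?thesis unfolding pgradV_def by (simp add: matrix_vector_mul_assoc[symmetric])
qed

lemma ones_nth: "ones $ i = 1" by (simp add: ones_def)

lemma pgradA_col:
  fixes mu :: "real^'n::finite" and A :: "real^'n^'t::finite"
  shows "ones v* pgradA mu V A s = (0 :: real^'n)"
proof -
  have T: "real CARD('t) \<noteq> 0" by simp
  have H: "\<And>(y::real^'t) k. (\<Sum>t\<in>UNIV. (y $ t - sum (($) y) UNIV / real CARD('t)) / mu $ k) = 0"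
    unfolding sum_divide_distrib[symmetric] sum_subtractf sum_constant using T by simp
  show ?thesis using H
    by (simp add: pgradA_def vec_eq_iff vector_matrix_mult_def ones_nth LT_mv)
qed

theorem lemmaC6:
  fixes mu :: "real^'n::finite"
    and P V :: "real^'n^'n"
    and Q A :: "real^'n^'t::finite"
    and eta_V eta_A :: real
    and B :: nat
    and smp :: "nat \<Rightarrow> ('n,'t) sample"
  assumes mu_pos: "\<forall>i. mu $ i > 0"
    and mu_sum: "(\<Sum>i\<in>UNIV. mu $ i) = 1"
    and P_nonneg: "\<forall>i j. P $ i $ j \<ge> 0"
    and P_col: "\<forall>j. (\<Sum>i\<in>UNIV. P $ i $ j) = 1"
    and P_mu: "P *v mu = mu"
    and Q_nonneg: "\<forall>t k. Q $ t $ k \<ge> 0"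
    and Q_col: "\<forall>k. (\<Sum>t\<in>UNIV. Q $ t $ k) = 1"
    and KP_pos: "K_P mu P > 0"
    and KQ_pos: "K_Q mu Q > 0"
    and V_col: "ones v* V = ones"
    and A_col: "ones v* A = ones"
    and V_mu: "V *v mu = mu"
    and B_pos: "B > 0"
  defines "hV \<equiv> BpgradV mu B smp V A - EpgradV mu P Q V A"
    and "hA \<equiv> BpgradA mu B smp V A - EpgradA mu P Q V A"
  defines "V' \<equiv> V - eta_V *\<^sub>R (EpgradV mu P Q V A + hV)"
    and "A' \<equiv> A - eta_A *\<^sub>R (EpgradA mu P Q V A + hA)"
  defines "aV \<equiv> alpha_V mu P V" and "aA \<equiv> alpha_A mu Q A"
    and "DV \<equiv> Delta_V mu P V" and "DA \<equiv> Delta_A mu Q A"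
  defines "cA \<equiv> 1 - eta_A * K_P mu P * aV\<^sup>2 - eta_A * mu_norm2 mu DV"
    and "cV \<equiv> 1 - eta_V * (aA\<^sup>2 * K_Q mu Q + 1 / real CARD('t)) - eta_V * mu_norm2 mu DA"
  shows "(mu_norm2 mu (Delta_A mu Q A') =
           cA\<^sup>2 * mu_norm2 mu DA - 2 * eta_A * cA * mu_inner mu DA hA
           - eta_A\<^sup>2 / K_Q mu Q * (mu_inner mu hA Q)\<^sup>2 + eta_A\<^sup>2 * mu_norm2 mu hA)
       \<and> (mu_norm2 mu (Delta_V mu P V') =
           cV\<^sup>2 * mu_norm2 mu DV - 2 * eta_V * cV * mu_inner mu DV hV
           - eta_V\<^sup>2 / K_P mu P * (mu_inner mu P hV)\<^sup>2 + eta_V\<^sup>2 * mu_norm2 mu hV)"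
proof -
  let ?T = "real CARD('t)"
  define N1 :: "real^'n^'n" where "N1 = outer mu ones"
  define JT :: "real^'n^'t" where "JT = (1 / real CARD('t)) *\<^sub>R outer ones ones"
  define a where "a = mu_norm2 mu A"
  define b where "b = mu_inner mu A Q"
  define c1 where "c1 = mu_norm2 mu V - mu \<bullet> mu"
  define c2 where "c2 = mu_inner mu V P - mu \<bullet> mu"
  have mumu: "mu \<bullet> mu \<noteq> 0"
  proof -
    have "mu \<noteq> 0" using mu_pos by (metis less_irrefl zero_index)
    then show ?thesis by simp
  qed
  have T: "?T > 0" by simp
  have Vc: "\<forall>k. (\<Sum>t\<in>UNIV. V $ t $ k) = 1"
    using V_col by (simp add: vec_eq_iff vector_matrix_mult_def ones_nth)
  have Ac: "\<forall>k. (\<Sum>t\<in>UNIV. A $ t $ k) = 1"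
    using A_col by (simp add: vec_eq_iff vector_matrix_mult_def ones_nth)
  have KP: "K_P mu P = mu_inner mu (P - N1) (P - N1)"
    unfolding K_P_def mu_norm2_def N1_def using innerN1[OF mu_sum P_mu P_mu] .
  have KQ: "K_Q mu Q = mu_inner mu (Q - JT) (Q - JT)"
    unfolding K_Q_def mu_norm2_def JT_def using innerJ[OF mu_sum Q_col Q_col] .
  have EV: "EpgradV mu P Q V A = a *\<^sub>R (V - N1) - b *\<^sub>R (P - N1)"
    unfolding a_def b_def N1_def by (rule EpgradV_closed[OF mu_pos mu_sum P_col P_mu Q_col A_col V_col V_mu])
  have N1mu: "N1 *v mu = mu" unfolding N1_def by (simp add: outer_mv ones_dot mu_sum)
  have EVmu: "EpgradV mu P Q V A *v mu = 0"
    unfolding EV by (simp add: matrix_vector_mult_diff_rdistrib scaleR_matrix_vector_assoc[symmetric] V_mu P_mu N1mu)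
  have BVmu: "BpgradV mu B smp V A *v mu = 0"
    unfolding BpgradV_def by (simp add: scaleR_matrix_vector_assoc[symmetric] mv_sum pgradV_mu[OF mumu])
  have hVmu: "hV *v mu = 0" unfolding hV_def by (simp add: matrix_vector_mult_diff_rdistrib EVmu BVmu)
  have V'mu: "V' *v mu = mu" unfolding V'_def
    by (simp add: matrix_vector_mult_diff_rdistrib matrix_vector_mult_add_rdistrib scaleR_matrix_vector_assoc[symmetric] EVmu hVmu V_mu)
  have aV: "aV = mu_inner mu (V - N1) (P - N1) / K_P mu P"
    unfolding aV_def alpha_V_def N1_def using innerN1[OF mu_sum V_mu P_mu] by simp
  have DV: "DV = (V - N1) - (mu_inner mu (V - N1) (P - N1) / K_P mu P) *\<^sub>R (P - N1)"
    unfolding DV_def Delta_V_def aV_def[symmetric] aV N1_def by (simp add: algebra_simps)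
  have DV': "Delta_V mu P V' = (V' - N1) - (mu_inner mu (V' - N1) (P - N1) / K_P mu P) *\<^sub>R (P - N1)"
    unfolding Delta_V_def alpha_V_def N1_def using innerN1[OF mu_sum V'mu P_mu] by (simp add: algebra_simps)
  have W': "V' - N1 = (V - N1) - eta_V *\<^sub>R (a *\<^sub>R (V - N1) - b *\<^sub>R (P - N1) + hV)"
    unfolding V'_def EV by simp
  have hVP: "mu_inner mu P hV = mu_inner mu hV (P - N1)"
  proof -
    have "mu_inner mu hV N1 = 0" unfolding N1_def mu_inner_outer1 hVmu by simp
    then show ?thesis by (simp add: mi_diff_right mu_inner_comm[of mu P hV])
  qed
  have EA: "EpgradA mu P Q V A = c1 *\<^sub>R (A - JT) - c2 *\<^sub>R (Q - JT)"
    unfolding c1_def c2_def JT_def by (rule EpgradA_closed[OF mu_pos mu_sum P_col P_mu Q_col A_col V_mu])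
  have JTc: "ones v* JT = (0::real^'n) + ones v* JT" by simp
  have colJT: "ones v* JT = (ones :: real^'n)"
    unfolding JT_def vector_scaleR_matrix_ac vm_outer using T by (simp add: ones_dot ones_nth)
  have EAc: "ones v* EpgradA mu P Q V A = (0::real^'n)"
  proof -
    have Qc1: "ones v* Q = (ones::real^'n)" using Q_col by (simp add: vec_eq_iff vector_matrix_mult_def ones_nth)
    show ?thesis unfolding EA by (simp add: vector_matrix_mult_diff_rdistrib vector_scaleR_matrix_ac A_col Qc1 colJT)
  qed
  have BAc: "ones v* BpgradA mu B smp V A = (0::real^'n)"
    unfolding BpgradA_def by (simp add: vector_scaleR_matrix_ac vm_sum pgradA_col)
  have hAc: "ones v* hA = (0::real^'n)" unfolding hA_def by (simp add: vector_matrix_mult_diff_rdistrib EAc BAc)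
  have A'c1: "ones v* A' = (ones::real^'n)" unfolding A'_def
    by (simp add: vector_matrix_mult_diff_rdistrib vm_add vector_scaleR_matrix_ac EAc hAc A_col)
  have A'c: "\<forall>k. (\<Sum>t\<in>UNIV. A' $ t $ k) = 1"
    using A'c1 by (simp add: vec_eq_iff vector_matrix_mult_def ones_nth)
  have hAc': "\<forall>k. (\<Sum>t\<in>UNIV. hA $ t $ k) = 0"
    using hAc by (simp add: vec_eq_iff vector_matrix_mult_def ones_nth)
  have aA: "aA = mu_inner mu (A - JT) (Q - JT) / K_Q mu Q"
    unfolding aA_def alpha_A_def JT_def using innerJ[OF mu_sum Ac Q_col] by simp
  have DA: "DA = (A - JT) - (mu_inner mu (A - JT) (Q - JT) / K_Q mu Q) *\<^sub>R (Q - JT)"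
    unfolding DA_def Delta_A_def aA_def[symmetric] aA JT_def by (simp add: algebra_simps)
  have DA': "Delta_A mu Q A' = (A' - JT) - (mu_inner mu (A' - JT) (Q - JT) / K_Q mu Q) *\<^sub>R (Q - JT)"
    unfolding Delta_A_def alpha_A_def JT_def using innerJ[OF mu_sum A'c Q_col] by (simp add: algebra_simps)
  have X': "A' - JT = (A - JT) - eta_A *\<^sub>R (c1 *\<^sub>R (A - JT) - c2 *\<^sub>R (Q - JT) + hA)"
    unfolding A'_def EA by simp
  have hAQ: "mu_inner mu hA Q = mu_inner mu hA (Q - JT)"
  proof -
    have "mu_inner mu hA JT = 0" unfolding JT_def mu_inner_J using hAc' by simp
    then show ?thesis by (simp add: mi_diff_right)
  qed
  have c1e: "c1 = K_P mu P * aV\<^sup>2 + mu_norm2 mu DV"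
  proof -
    have "c1 = mu_norm2 mu (V - N1)" unfolding c1_def mu_norm2_def N1_def using innerN1[OF mu_sum V_mu V_mu] .
    also have "\<dots> = aV\<^sup>2 * K_P mu P + mu_norm2 mu DV"
      unfolding aV DV using pythag[OF KP[symmetric] KP_pos] .
    finally show ?thesis by simp
  qed
  have ae: "a = aA\<^sup>2 * K_Q mu Q + 1 / real CARD('t) + mu_norm2 mu DA"
  proof -
    have "a - 1 / real CARD('t) = mu_norm2 mu (A - JT)" unfolding a_def mu_norm2_def JT_def using innerJ[OF mu_sum Ac Ac] .
    also have "\<dots> = aA\<^sup>2 * K_Q mu Q + mu_norm2 mu DA"
      unfolding aA DA using pythag[OF KQ[symmetric] KQ_pos] .
    finally show ?thesis by simp
  qed
  have cAe: "cA = 1 - eta_A * c1" unfolding cA_def c1e by (simp add: algebra_simps)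
  have cVe: "cV = 1 - eta_V * a" unfolding cV_def ae by (simp add: algebra_simps)
  have c2e: "c2 = mu_inner mu (V - N1) (P - N1)" unfolding c2_def N1_def using innerN1[OF mu_sum V_mu P_mu] .
  show ?thesis
  proof
    show "mu_norm2 mu (Delta_A mu Q A') =
           cA\<^sup>2 * mu_norm2 mu DA - 2 * eta_A * cA * mu_inner mu DA hA
           - eta_A\<^sup>2 / K_Q mu Q * (mu_inner mu hA Q)\<^sup>2 + eta_A\<^sup>2 * mu_norm2 mu hA"
      unfolding DA' X' DA cAe hAQ
      using final_abstract[OF mu_pos KQ[symmetric] KQ_pos, of "A - JT" eta_A c1 c2 hA] .
    show "mu_norm2 mu (Delta_V mu P V') =
           cV\<^sup>2 * mu_norm2 mu DV - 2 * eta_V * cV * mu_inner mu DV hV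
           - eta_V\<^sup>2 / K_P mu P * (mu_inner mu P hV)\<^sup>2 + eta_V\<^sup>2 * mu_norm2 mu hV"
      unfolding DV' W' DV cVe hVP
      using final_abstract[OF mu_pos KP[symmetric] KP_pos, of "V - N1" eta_V a b hV] .
  qed
qed


end
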